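(* Let $A_1,A_2,B,D\in\mathbb R^{n\times n}$ and $K,L_0,L_1,L_2,\delta>0$ satisfy: (i) $A_1+A_1^\top$, $A_2+A_2^\top$ and $B+B^\top$ are positive semidefinite; (ii) $\|A_1\|_\sigma,\|A_2\|_\sigma,\|B\|_\sigma\le L_0\le 1/106$; (iii) $D+D^\top\preceq L_1(B^\top B+A_1A_1^\top)+K\delta^2 I$; (iv) $D^\top D\preceq L_2 B^\top B$; (v) $10L_0+\frac{4L_2}{L_0^2}+5L_1\le 24/50$; (vi) $\|X-Y\|_\sigma\le\delta$ for any two $X,Y\in\{A_1,A_2,B\}$. Then $$\|I-A_1+A_2B+D\|_\sigma\le\sqrt{1+(400+K)\delta^2}.$$
   Context: $\|\cdot\|_\sigma$ is the spectral norm; for symmetric matrices $S\preceq T$ means $T-S$ is positive semidefinite. *)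

theory Defs
  imports "HOL-Analysis.Analysis"
begin

definition spec_norm :: "real^'n^'n \<Rightarrow> real" where
  "spec_norm M = onorm (\<lambda>x. M *v x)"

definition psd :: "real^'n^'n \<Rightarrow> bool" where
  "psd M \<longleftrightarrow> (\<forall>x. 0 \<le> x \<bullet> (M *v x))"

definition loewner_le :: "real^'n^'n \<Rightarrow> real^'n^'n \<Rightarrow> bool" where
  "loewner_le S T \<longleftrightarrow> psd (T - S)"

end

theory Submission
  imports Defs
begin

lemma mv_norm: "norm (N *v y) \<le> spec_norm N * norm (y::real^'n)"
  unfolding spec_norm_def by (rule onorm) simp

lemma inner_tr: "(x::real^'n) \<bullet> (N *v y) = (transpose N *v x) \<bullet> y"
  by (simp add: dot_lmul_matrix)

lemma scaleR_mv: "(c *\<^sub>R (A::real^'n^'m)) *v x = c *\<^sub>R (A *v x)"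
  by (vector matrix_vector_mult_def sum_distrib_left algebra_simps)

lemma transpose_add': "transpose ((A::real^'n^'n) + B) = transpose A + transpose B"
  by (vector transpose_def)

lemma psd_half: assumes "psd (A + transpose A)" shows "0 \<le> x \<bullet> (A *v (x::real^'n))"
proof -
  have "0 \<le> x \<bullet> ((A + transpose A) *v x)" using assms psd_def by blast
  also have "\<dots> = 2 * (x \<bullet> (A *v x))"
    by (simp add: matrix_vector_mult_add_rdistrib inner_add_right dot_lmul_matrix inner_commute[of x "x v* A"])
  finally show ?thesis by simp
qed

lemma quad_disc:
  fixes a b c :: real
  assumes "\<And>t. 0 \<le> a + 2*b*t + c*t^2" "0 \<le> c" shows "b^2 \<le> a*c"
proof (cases "c = 0")
  case True
  show ?thesis
  proof (rule ccontr)
    assume "\<not> ?thesis"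
    then have "b \<noteq> 0" using True by simp
    have "0 \<le> a + 2*b*(-(a+1)/(2*b)) + c*(-(a+1)/(2*b))^2" by (rule assms)
    then show False using True \<open>b \<noteq> 0\<close> by (simp add: field_simps)
  qed
next
  case False
  then have c: "c > 0" using assms(2) by simp
  have "0 \<le> a + 2*b*(-b/c) + c*(-b/c)^2" by (rule assms)
  also have "\<dots> = (a*c - b^2)/c" using c by (simp add: field_simps power2_eq_square)
  finally show ?thesis using c by (simp add: zero_le_divide_iff)
qed

lemma semi_cs:
  fixes S :: "real^'n^'n"
  assumes "psd S" "transpose S = S"
  shows "(y \<bullet> (S *v z))^2 \<le> (y \<bullet> (S *v y)) * (z \<bullet> (S *v z))"
proof (rule quad_disc)
  have sym: "z \<bullet> (S *v y) = y \<bullet> (S *v z)"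
    by (metis assms(2) dot_lmul_matrix inner_commute transpose_matrix_vector)
  fix t :: real
  have "0 \<le> (y + t *\<^sub>R z) \<bullet> (S *v (y + t *\<^sub>R z))" using assms(1) psd_def by blast
  also have "\<dots> = y \<bullet> (S *v y) + 2 * (y \<bullet> (S *v z)) * t + (z \<bullet> (S *v z)) * t^2"
    by (simp add: matrix_vector_right_distrib matrix_vector_mult_scaleR inner_add_left inner_add_right sym algebra_simps power2_eq_square)
  finally show "0 \<le> y \<bullet> (S *v y) + 2 * (y \<bullet> (S *v z)) * t + (z \<bullet> (S *v z)) * t^2" .
next
  show "0 \<le> z \<bullet> (S *v z)" using assms(1) psd_def by blast
qed


lemma poly: fixes U V t :: real assumes "0 \<le> t" "0 \<le> U" "0 \<le> V"
  shows "-(4/10)*(U^2+V^2) + (2*t*(U+t) + 2*t*V) + 96/1000*((U+t)^2+V^2) + 2*U*(U+t)/31 + (U+t)^2/961 \<le> 400*t^2"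
proof -
  have eq: "-(4/10)*(U^2+V^2) + (2*t*(U+t) + 2*t*V) + 96/1000*((U+t)^2+V^2) + 2*U*(U+t)/31 + (U+t)^2/961
     = -(28643/120125)*(U*U) - (38/125)*(V*V) + (271314/120125)*(U*t) + 2*(V*t) + (251907/120125)*(t*t)"
    by (simp add: power2_eq_square algebra_simps add_divide_distrib)
  have a: "10*(U*t) \<le> U*U + 25*(t*t)" "8*(V*t) \<le> V*V + 16*(t*t)" "0 \<le> U*t" "0 \<le> V*t"
  proof -
    have "0 \<le> (U - 5*t)^2" "0 \<le> (V - 4*t)^2" by auto
    then show "10*(U*t) \<le> U*U + 25*(t*t)" "8*(V*t) \<le> V*V + 16*(t*t)"
      by (simp_all add: power2_eq_square algebra_simps)
    show "0 \<le> U*t" "0 \<le> V*t" using assms by auto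
  qed
  have lin: "\<And>uu ww ut wt tt::real. 10*ut \<le> uu + 25*tt \<Longrightarrow> 8*wt \<le> ww + 16*tt \<Longrightarrow> 0 \<le> ut \<Longrightarrow> 0 \<le> wt \<Longrightarrow> 0 \<le> tt \<Longrightarrow>
     -(28643/120125)*uu - (38/125)* ww + (271314/120125)*ut + 2*wt + (251907/120125)*tt \<le> 400*tt" by linarith
  have "400*t^2 = 400*(t*t)" by (simp add: power2_eq_square)
  then show ?thesis unfolding eq using lin[OF a] by simp
qed

lemma scalar_main:
  fixes nx U V uv a bn dn d L0 L1 L2 K \<delta> xe xd ur rr :: real
  assumes h: "0 \<le> nx" "0 \<le> U" "U \<le> L0*nx" "0 \<le> V" "0 \<le> bn" "bn \<le> U + d*nx"
    "0 \<le> dn" "dn^2 \<le> L2*bn^2" "0 \<le> d" "d \<le> 2*L0" "d \<le> \<delta>" "-(U*V) \<le> uv"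
    "U^2 + 2*uv + V^2 \<le> 4*L0*a" "0 < L0" "L0 \<le> 1/106" "0 < L1" "0 < L2" "0 < K"
    "10 * L0 + 4 * L2 / L0^2 + 5 * L1 \<le> 24/50"
    "xe \<le> d*nx*bn + d*V*nx" "2*xd \<le> L1*(bn^2+V^2) + K*\<delta>^2*nx^2"
    "- ur \<le> U*(L0*U + d*bn + L0*d*nx + dn)" "rr \<le> (L0*U + d*bn + L0*d*nx + dn)^2"
    "0 \<le> U^2 + 2*uv + V^2"
  shows "nx^2 - 2*a + U^2 + 2*(uv + xe + xd) - 2*ur + rr \<le> (1 + (400+K)*\<delta>^2)*nx^2"
proof -
  define R where "R = L0*U + d*bn + L0*d*nx + dn"
  define t where "t = d*nx"
  have t0: "0 \<le> t" using h(1,9) by (simp add: t_def)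
  have "0 \<le> 4 * L2 / L0^2" using h(14,17) by simp
  have "4 * L2 / L0^2 \<le> 24/50" using h(19) h(14) h(16) \<open>0 \<le> 4 * L2 / L0^2\<close> by linarith
  then have L2b: "L2 \<le> 12/100 * L0^2" using h(14) by (simp add: field_simps)
  have L1b: "L1 \<le> 96/1000" using h(19) h(14) \<open>0 \<le> 4 * L2 / L0^2\<close> by linarith
  have "dn^2 \<le> L2*bn^2" by (rule h(8))
  also have "\<dots> \<le> 12/100 * L0^2 * bn^2" using L2b by (intro mult_right_mono) auto
  also have "\<dots> \<le> 1225/10000 * L0^2 * bn^2" by (intro mult_right_mono) auto
  also have "\<dots> = (35/100*L0*bn)^2" by (simp add: power2_eq_square)
  finally have "dn^2 \<le> (35/100*L0*bn)^2" .
  note dsq = this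
  have dnb: "dn \<le> 35/100*L0*bn" using power2_le_imp_le[OF dsq] h(5,14) by simp
  have R0: "0 \<le> R" using h(2,5,7,9,1,14) by (simp add: R_def)
  have dbn: "d*bn \<le> 2*L0*(U+t)" unfolding t_def using h(5,6,10,9) by (intro mult_mono) auto
  have "35/100*L0*bn \<le> 35/100*L0*(U+t)" using h(6,14) t_def by (intro mult_left_mono) auto
  moreover have "L0*d*nx = L0*t" by (simp add: t_def)
  ultimately have "R \<le> L0*U + 2*L0*(U+t) + L0*t + 35/100*L0*(U+t)"
    unfolding R_def using dbn dnb by linarith
  also have "\<dots> = 335/100*L0*(U+t)" by (simp add: algebra_simps)
  also have "\<dots> \<le> 1/31*(U+t)" using h(15) t0 h(2) by (intro mult_right_mono) auto
  also have "\<dots> = (U+t)/31" by simp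
  finally have Rb: "R \<le> (U+t)/31" .
  have s4: "- 2*a + U^2 + 2*uv \<le> -(4/10)*(U^2+V^2)"
  proof -
    have a0: "0 \<le> a"
    proof (rule ccontr)
      assume "\<not> 0 \<le> a"
      then have "4*L0*a < 0" using h(14) by (simp add: mult_pos_neg)
      then show False using h(13,24) by linarith
    qed
    have "4*L0*a \<le> 4/106*a" using h(15) a0 by (intro mult_right_mono) auto
    then have "U^2 + 2*uv + V^2 \<le> 4/106*a" using h(13) by (rule_tac order_trans) auto
    then have q: "53*(U^2 + 2*uv + V^2) \<le> 2*a" by simp
    have "0 \<le> 16/10*(U - 5/4*V)^2 + 1/10*V^2" by simp
    also have "\<dots> = 16/10*U^2 - 4*(U*V) + 26/10*V^2" by (simp add: power2_eq_square algebra_simps)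
    finally have w: "0 \<le> 16/10*U^2 - 4*(U*V) + 26/10*V^2" .
    have lin: "\<And>uu ww p x aa::real. 53*(uu + 2*x + ww) \<le> 2*aa \<Longrightarrow> 0 \<le> 16/10*uu - 4*p + 26/10* ww \<Longrightarrow> -p \<le> x
       \<Longrightarrow> 0 \<le> uu + 2*x + ww \<Longrightarrow> - 2*aa + uu + 2*x \<le> -(4/10)*(uu+ww)" by argo
    show ?thesis by (rule lin[OF q w h(12,24)])
  qed
  have bnt: "bn \<le> U + t" using h(6) t_def by simp
  have e2: "2*xe \<le> 2*t*(U+t) + 2*t*V"
  proof -
    have "d*nx*bn \<le> t*(U+t)" using bnt t0 h(5) t_def by (simp add: mult_left_mono)
    moreover have "d*V*nx = t*V" by (simp add: t_def)
    ultimately show ?thesis using h(20) by linarith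
  qed
  have bn2: "bn^2 \<le> (U+t)^2" using bnt h(5) by (simp add: power_mono)
  have "L1*(bn^2+V^2) \<le> 96/1000*((U+t)^2+V^2)"
  proof -
    have "L1*(bn^2+V^2) \<le> 96/1000*(bn^2+V^2)" using L1b by (intro mult_right_mono) auto
    also have "\<dots> \<le> 96/1000*((U+t)^2+V^2)" using bn2 by simp
    finally show ?thesis .
  qed
  then have d2: "2*xd \<le> 96/1000*((U+t)^2+V^2) + K*\<delta>^2*nx^2" using h(21) by linarith
  have u2: "- 2*ur \<le> 2*U*(U+t)/31"
  proof -
    have "U*R \<le> U*((U+t)/31)" using Rb h(2) by (rule mult_left_mono)
    then show ?thesis using h(22) R_def by simp
  qed
  have r2: "rr \<le> (U+t)^2/961"
  proof -
    have "R^2 \<le> ((U+t)/31)^2" using Rb R0 by (simp add: power_mono)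
    then show ?thesis using h(23) R_def by (simp add: power_divide)
  qed
  have poly: "-(4/10)*(U^2+V^2) + (2*t*(U+t) + 2*t*V) + 96/1000*((U+t)^2+V^2) + 2*U*(U+t)/31 + (U+t)^2/961 \<le> 400*t^2"
    by (rule poly) (use t0 h(2,4) in auto)
  have tt: "400*t^2 \<le> 400*\<delta>^2*nx^2"
  proof -
    have "d^2 \<le> \<delta>^2" using h(9,11) by (simp add: power_mono)
    then have "d^2*nx^2 \<le> \<delta>^2*nx^2" by (simp add: mult_right_mono)
    then show ?thesis by (simp add: t_def power_mult_distrib)
  qed
  have "nx^2 - 2*a + U^2 + 2*(uv + xe + xd) - 2*ur + rr \<le> nx^2 + K*\<delta>^2*nx^2 + 400*t^2"
  proof -
    have lin: "\<And>p1 b1 e b2 xd2 b3 kk u b4 r b5 T n :: real. p1 \<le> b1 \<Longrightarrow> e \<le> b2 \<Longrightarrow> xd2 \<le> b3 + kk \<Longrightarrow> u \<le> b4 \<Longrightarrow> r \<le> b5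
      \<Longrightarrow> b1 + (b2 + b3 + b4 + b5) \<le> T \<Longrightarrow> n + p1 + e + xd2 + u + r \<le> n + kk + T" by argo
    have eq: "nx^2 - 2*a + U^2 + 2*(uv + xe + xd) - 2*ur + rr = nx^2 + (- 2*a + U^2 + 2*uv) + 2*xe + 2*xd + (- 2*ur) + rr"
      by (simp add: algebra_simps)
    have p': "-(4/10)*(U^2+V^2) + ((2*t*(U+t) + 2*t*V) + 96/1000*((U+t)^2+V^2) + 2*U*(U+t)/31 + (U+t)^2/961) \<le> 400*t^2"
      using poly by (simp add: algebra_simps)
    show ?thesis unfolding eq by (rule lin[OF s4 e2 d2 u2 r2 p'])
  qed
  also have "\<dots> \<le> (1 + (400+K)*\<delta>^2)*nx^2" using tt by (simp add: algebra_simps)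
  finally show ?thesis .
qed


lemma inner_tr2: "(x::real^'n) \<bullet> (transpose N *v y) = (N *v x) \<bullet> y"
  using inner_tr[of x "transpose N" y] by simp

lemma diff_bound:
  assumes "spec_norm X \<le> L0" "spec_norm Y \<le> L0" "spec_norm (X - Y) \<le> \<delta>" "0 \<le> L0"
  shows "norm ((X - Y) *v (y::real^'n)) \<le> min \<delta> (2*L0) * norm y"
proof -
  have a: "norm ((X - Y) *v y) \<le> \<delta> * norm y"
    using mv_norm[of "X - Y" y] assms(3) by (meson mult_right_mono norm_ge_zero order_trans)
  have "norm ((X - Y) *v y) = norm (X *v y - Y *v y)" by (simp add: matrix_vector_mult_diff_rdistrib)
  also have "\<dots> \<le> norm (X *v y) + norm (Y *v y)" by (rule norm_triangle_ineq4)
  also have "\<dots> \<le> L0 * norm y + L0 * norm y"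
    using mv_norm[of X y] mv_norm[of Y y] assms(1,2)
    by (meson add_mono mult_right_mono norm_ge_zero order_trans)
  finally have b: "norm ((X - Y) *v y) \<le> 2*L0 * norm y" by simp
  have "min \<delta> (2*L0) * norm y = min (\<delta> * norm y) (2*L0 * norm y)" by (simp add: min_mult_distrib_right)
  then show ?thesis using a b by simp
qed

lemma mv_le: assumes "spec_norm N \<le> L" shows "norm (N *v (y::real^'n)) \<le> L * norm y"
  using mv_norm[of N y] assms by (meson mult_right_mono norm_ge_zero order_trans)

theorem lemma13:
  fixes A1 A2 B D :: "real^'n^'n" and K L0 L1 L2 \<delta> :: real
  assumes pos: "K > 0" "L0 > 0" "L1 > 0" "L2 > 0" "\<delta> > 0"
    and i: "psd (A1 + transpose A1)" "psd (A2 + transpose A2)" "psd (B + transpose B)"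
    and ii: "spec_norm A1 \<le> L0" "spec_norm A2 \<le> L0" "spec_norm B \<le> L0" "L0 \<le> 1/106"
    and iii: "loewner_le (D + transpose D)
                (L1 *\<^sub>R (transpose B ** B + A1 ** transpose A1) + (K * \<delta>^2) *\<^sub>R mat 1)"
    and iv: "loewner_le (transpose D ** D) (L2 *\<^sub>R (transpose B ** B))"
    and v: "10 * L0 + 4 * L2 / L0^2 + 5 * L1 \<le> 24/50"
    and vi: "\<forall>X\<in>{A1, A2, B}. \<forall>Y\<in>{A1, A2, B}. spec_norm (X - Y) \<le> \<delta>"
  shows "spec_norm (mat 1 - A1 + A2 ** B + D) \<le> sqrt (1 + (400 + K) * \<delta>^2)"
proof -
  define c where "c = 1 + (400 + K) * \<delta>^2"
  define d where "d = min \<delta> (2*L0)"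
  have key: "norm ((mat 1 - A1 + A2 ** B + D) *v x) \<le> sqrt c * norm x" for x :: "real^'n"
  proof -
    define u where "u = A1 *v x"
    define v where "v = transpose A1 *v x"
    define bx where "bx = B *v x"
    define dx where "dx = D *v x"
    define e where "e = (A2 ** B) *v x - A1 *v u"
    define r where "r = A1 *v u + e + dx"
    define nx where "nx = norm x"
    define U where "U = norm u"
    define V where "V = norm v"
    define uv where "uv = u \<bullet> v"
    define a where "a = x \<bullet> u"
    define bn where "bn = norm bx"
    define dn where "dn = norm dx"
    define xe where "xe = x \<bullet> e"
    define xd where "xd = x \<bullet> dx"
    define ur where "ur = u \<bullet> r"
    define rr where "rr = r \<bullet> r"
    have dA2A1: "norm ((A2 - A1) *v y) \<le> d * norm y" for y :: "real^'n"
      unfolding d_def using vi ii pos by (intro diff_bound) auto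
    have dBA1: "norm ((B - A1) *v y) \<le> d * norm y" for y :: "real^'n"
      unfolding d_def using vi ii pos by (intro diff_bound) auto
    have A1n: "norm (A1 *v y) \<le> L0 * norm y" for y :: "real^'n" using ii(1) by (rule mv_le)
    have eid: "e = (A2 - A1) *v bx + A1 *v ((B - A1) *v x)"
      unfolding e_def bx_def u_def
      by (simp add: matrix_vector_mul_assoc[symmetric] matrix_vector_mult_diff_rdistrib matrix_vector_mult_diff_distrib)
    have Mx: "(mat 1 - A1 + A2 ** B + D) *v x = x - u + r"
      unfolding r_def e_def u_def dx_def
      by (simp add: matrix_vector_mult_add_rdistrib matrix_vector_mult_diff_rdistrib)
    have h3: "U \<le> L0*nx" unfolding U_def nx_def u_def by (rule A1n)
    have h6: "bn \<le> U + d*nx"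
    proof -
      have "bx = u + (B - A1) *v x" unfolding bx_def u_def by (simp add: matrix_vector_mult_diff_rdistrib)
      then have "bn \<le> U + norm ((B - A1) *v x)" unfolding bn_def U_def by (simp add: norm_triangle_ineq)
      then show ?thesis using dBA1[of x] nx_def by simp
    qed
    have h8: "dn^2 \<le> L2*bn^2"
    proof -
      have "0 \<le> x \<bullet> ((L2 *\<^sub>R (transpose B ** B) - transpose D ** D) *v x)"
        using iv unfolding loewner_le_def psd_def by blast
      also have "\<dots> = L2 * (x \<bullet> (transpose B *v bx)) - x \<bullet> (transpose D *v dx)"
        unfolding bx_def dx_def
        by (simp add: matrix_vector_mult_diff_rdistrib scaleR_mv matrix_vector_mul_assoc[symmetric] inner_diff_right)
      also have "\<dots> = L2 * bn^2 - dn^2"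
        unfolding inner_tr2 bn_def dn_def bx_def dx_def by (simp add: dot_square_norm)
      finally show ?thesis by simp
    qed
    have h12: "-(U*V) \<le> uv"
      using norm_cauchy_schwarz[of "-u" v] unfolding U_def V_def uv_def by simp
    have uvsq: "norm (u + v)^2 = U^2 + 2*uv + V^2"
      unfolding U_def V_def uv_def by (simp add: power2_norm_eq_inner inner_add_left inner_add_right inner_commute)
    have a0: "0 \<le> a" unfolding a_def u_def by (rule psd_half[OF i(1)])
    have h13: "U^2 + 2*uv + V^2 \<le> 4*L0*a"
    proof -
      define S where "S = A1 + transpose A1"
      define w where "w = S *v x"
      have wuv: "w = u + v" unfolding w_def S_def u_def v_def by (simp add: matrix_vector_mult_add_rdistrib)
      have symS: "transpose S = S" unfolding S_def by (simp add: transpose_add' add.commute)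
      have cs: "(w \<bullet> (S *v x))^2 \<le> (w \<bullet> (S *v w)) * (x \<bullet> (S *v x))"
        by (rule semi_cs[OF _ symS]) (use i(1) S_def in simp)
      have e1: "w \<bullet> (S *v x) = norm w ^2" unfolding w_def by (simp add: dot_square_norm)
      have e2: "x \<bullet> (S *v x) = 2*a"
        unfolding S_def a_def u_def
        by (simp add: matrix_vector_mult_add_rdistrib inner_add_right dot_lmul_matrix inner_commute[of x "x v* A1"])
      have e3: "w \<bullet> (S *v w) = 2 * (w \<bullet> (A1 *v w))"
        unfolding S_def
        by (simp add: matrix_vector_mult_add_rdistrib inner_add_right dot_lmul_matrix inner_commute[of w "w v* A1"])
      have "w \<bullet> (A1 *v w) \<le> norm w * norm (A1 *v w)" by (rule norm_cauchy_schwarz)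
      also have "\<dots> \<le> norm w * (L0 * norm w)" by (rule mult_left_mono[OF A1n]) simp
      finally have f: "w \<bullet> (A1 *v w) \<le> norm w * (L0 * norm w)" .
      have "w \<bullet> (S *v w) \<le> 2*L0*norm w^2" using f unfolding e3 by (simp add: power2_eq_square algebra_simps)
      note ws = this
      have "(norm w^2)^2 \<le> (w \<bullet> (S *v w)) * (2*a)" using cs unfolding e1 e2 .
      also have "\<dots> \<le> (2*L0*norm w^2) * (2*a)" using ws a0 by (intro mult_right_mono) auto
      finally have "norm w^2 * norm w^2 \<le> norm w^2 * (4*L0*a)" by (simp add: power2_eq_square algebra_simps)
      then have "norm w^2 \<le> 4*L0*a"
      proof (cases "norm w = 0")
        case True
        then show ?thesis using a0 pos(2) by simp
      next
        case False
        then have "0 < norm w^2" by simp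
        then show ?thesis using mult_le_cancel_left_pos[of "norm w^2" "norm w^2" "4*L0*a"] \<open>norm w^2 * norm w^2 \<le> norm w^2 * (4*L0*a)\<close> by blast
      qed
      then show ?thesis using uvsq wuv by simp
    qed
    have h20: "xe \<le> d*nx*bn + d*V*nx"
    proof -
      have "xe = x \<bullet> ((A2 - A1) *v bx) + v \<bullet> ((B - A1) *v x)"
        unfolding xe_def eid v_def by (simp add: inner_add_right inner_tr)
      also have "\<dots> \<le> nx * (d*bn) + V * (d*nx)"
      proof (rule add_mono)
        show "x \<bullet> ((A2 - A1) *v bx) \<le> nx * (d*bn)"
          using norm_cauchy_schwarz[of x "(A2 - A1) *v bx"] dA2A1[of bx] unfolding nx_def bn_def
          by (meson mult_left_mono norm_ge_zero order_trans)
        show "v \<bullet> ((B - A1) *v x) \<le> V * (d*nx)"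
          using norm_cauchy_schwarz[of v "(B - A1) *v x"] dBA1[of x] unfolding nx_def V_def
          by (meson mult_left_mono norm_ge_zero order_trans)
      qed
      finally show ?thesis by (simp add: algebra_simps)
    qed
    have h21: "2*xd \<le> L1*(bn^2+V^2) + K*\<delta>^2*nx^2"
    proof -
      have "0 \<le> x \<bullet> (((L1 *\<^sub>R (transpose B ** B + A1 ** transpose A1) + (K * \<delta>^2) *\<^sub>R mat 1) - (D + transpose D)) *v x)"
        using iii unfolding loewner_le_def psd_def by blast
      also have "\<dots> = L1 * (x \<bullet> (transpose B *v bx) + x \<bullet> (A1 *v v)) + (K*\<delta>^2) * (x \<bullet> x) - (x \<bullet> dx + x \<bullet> (transpose D *v x))"
        unfolding bx_def v_def dx_def
        by (simp add: matrix_vector_mult_diff_rdistrib matrix_vector_mult_add_rdistrib scaleR_mv matrix_vector_mul_assoc[symmetric] inner_diff_right inner_add_right)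
      also have "\<dots> = L1 * (bn^2 + V^2) + (K*\<delta>^2) * nx^2 - 2*xd"
      proof -
        have t1: "x \<bullet> (transpose B *v bx) = bn^2" unfolding inner_tr2 by (simp add: bx_def bn_def dot_square_norm)
        have t2: "x \<bullet> (A1 *v v) = V^2" unfolding inner_tr by (simp add: v_def V_def dot_square_norm)
        have t3: "x \<bullet> (transpose D *v x) = xd" unfolding inner_tr2 xd_def dx_def by (simp add: inner_commute)
        have t4: "x \<bullet> x = nx^2" by (simp add: nx_def dot_square_norm)
        show ?thesis unfolding t1 t2 t3 t4 xd_def[symmetric] by simp
      qed
      finally show ?thesis by simp
    qed
    have nr: "norm r \<le> L0*U + d*bn + L0*d*nx + dn"
    proof -
      have "norm e \<le> d*bn + L0*(d*nx)"
      proof -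
        have "norm e \<le> norm ((A2 - A1) *v bx) + norm (A1 *v ((B - A1) *v x))"
          unfolding eid by (rule norm_triangle_ineq)
        also have "\<dots> \<le> d*bn + L0*(d*nx)"
        proof (rule add_mono)
          show "norm ((A2 - A1) *v bx) \<le> d*bn" using dA2A1[of bx] bn_def by simp
          have "norm (A1 *v ((B - A1) *v x)) \<le> L0 * norm ((B - A1) *v x)" by (rule A1n)
          also have "\<dots> \<le> L0*(d*nx)" using dBA1[of x] pos(2) nx_def by (simp add: mult_left_mono)
          finally show "norm (A1 *v ((B - A1) *v x)) \<le> L0*(d*nx)" .
        qed
        finally show ?thesis .
      qed
      moreover have "norm (A1 *v u) \<le> L0*U" using A1n[of u] U_def by simp
      moreover have "norm r \<le> norm (A1 *v u) + norm e + norm dx"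
        unfolding r_def by (meson norm_triangle_ineq order_trans add_right_mono)
      ultimately show ?thesis using dn_def by (simp add: algebra_simps)
    qed
    have R0: "0 \<le> L0*U + d*bn + L0*d*nx + dn" using norm_ge_zero[of r] nr by linarith
    have h22: "- ur \<le> U*(L0*U + d*bn + L0*d*nx + dn)"
    proof -
      have "- ur \<le> U * norm r" using norm_cauchy_schwarz[of "-u" r] unfolding ur_def U_def by simp
      also have "\<dots> \<le> U*(L0*U + d*bn + L0*d*nx + dn)" using nr U_def by (simp add: mult_left_mono)
      finally show ?thesis .
    qed
    have h23: "rr \<le> (L0*U + d*bn + L0*d*nx + dn)^2"
      unfolding rr_def using nr by (simp add: dot_square_norm power_mono)
    have h24: "0 \<le> U^2 + 2*uv + V^2" using uvsq by (metis zero_le_power2)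
    have d0: "0 \<le> d" "d \<le> 2*L0" "d \<le> \<delta>" using pos unfolding d_def by auto
    have sc: "nx^2 - 2*a + U^2 + 2*(uv + xe + xd) - 2*ur + rr \<le> (1 + (400+K)*\<delta>^2)*nx^2"
      by (rule scalar_main[OF _ _ h3 _ _ h6 _ h8 d0 h12 h13 pos(2) ii(4) pos(3,4,1) v h20 h21 h22 h23 h24])
        (auto simp: nx_def U_def V_def bn_def dn_def)
    have xr: "x \<bullet> r = uv + xe + xd"
      unfolding r_def xe_def xd_def uv_def u_def v_def by (simp add: inner_add_right inner_tr inner_commute)
    have "norm ((mat 1 - A1 + A2 ** B + D) *v x)^2 = nx^2 - 2*a + U^2 + 2*(x \<bullet> r) - 2*ur + rr"
      unfolding Mx nx_def a_def U_def ur_def rr_def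
      by (simp add: power2_norm_eq_inner inner_add_left inner_add_right inner_diff_left inner_diff_right inner_commute)
    also have "\<dots> \<le> c * nx^2" using sc xr c_def by simp
    finally have "norm ((mat 1 - A1 + A2 ** B + D) *v x)^2 \<le> c * nx^2" .
    then have "norm ((mat 1 - A1 + A2 ** B + D) *v x) \<le> sqrt (c * nx^2)" by (simp add: real_le_rsqrt)
    also have "\<dots> = sqrt c * norm x" by (simp add: real_sqrt_mult nx_def)
    finally show ?thesis .
  qed
  show ?thesis unfolding spec_norm_def c_def[symmetric] by (rule onorm_le) (rule key)
qed

end
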